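(* Let $F$ be a Ferrers diagram, $T\in\mathsf{EWtab}(F)$ and $S=S(T)$. If $T_{jk}$ (with $j\in\mathsf{rows}(F)$, $k\in\mathsf{cols}(F)$, $j<k$) is a cornersupport in $T$, then there exist a row $j'\ne j$ and column $k'\ne k$ such that $S_{j'k'}$ induces $T_{jk}$ to be a cornersupport, and either (i) $(j,k),(j,k'),(j',k')$ are cells of $F$ with $T_{jk}=T_{jk'}=0$ and $T_{j'k'}=1$, or (ii) $(j,k),(j',k),(j',k')$ are cells of $F$ with $T_{jk}=T_{j'k}=1$ and $T_{j'k'}=0$.
   Context: Ferrers diagrams and graphs: a Ferrers diagram $F$ (English convention) of semiperimeter $n+1$ has rows and columns labeled by $0,\ldots,n$: the $n+1$ unit steps of its south-east boundary path, traversed from top-right to bottom-left, are labeled $0,\ldots,n$; a vertical step labels the row it bounds, a horizontal step the column it bounds (top row labeled $0$). $\mathsf{rows}(F)$, $\mathsf{cols}(F)$ are the label sets; $F$ has a cell in row $i$, column $j$ iff $i<j$. $G(F)$ has vertex set $\{0,\ldots,n\}$ with edges $\{i,j\}$ for $i\in\mathsf{rows}(F)$, $j\in\mathsf{cols}(F)$, $i<j$. Sandpile model on $G(F)$ with sink $0$: configurations $c\in\mathbb{N}^n$; non-sink $v$ unstable if $c_v\ge\deg(v)$; toppling sends one grain to each neighbour (grains to $0$ disappear); toppling the sink adds one grain to each neighbour of $0$. Canonical toppling of a recurrent configuration $c$: topple the sink ($U^{(0)}_c=\{0\}$), then alternately topple simultaneously all unstable vertices in $\mathsf{cols}(F)$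 ($V^{(1)}_c$), all unstable in $\mathsf{rows}(F)$ ($U^{(1)}_c$), etc.; $\mathsf{CanonTop}(c)=(U^{(0)}_c,V^{(1)}_c,U^{(1)}_c,\ldots)$ is an ordered partition of $\{0,\ldots,n\}$. EW-tableaux: $0/1$-fillings $T$ of $F$ ($T_{ij}$ = entry in row $i$, column $j$) with top row all 1s, a 0 in every other row, and no rectangle with 0s in two diagonally opposite corners and 1s in the other two; $\mathsf{EWtab}(F)$ is their set. $\phi_{TC}(T)$ is the (recurrent) configuration with $c_i$ = number of 1s in row $i$ ($i\in\mathsf{rows}(F)$), $c_i$ = number of 0s in column $i$ ($i\in\mathsf{cols}(F)$). $\mathsf{CanonTop}(T):=\mathsf{CanonTop}(\phi_{TC}(T))$. Supplementary tableau $S=S(T)$: the $|\mathsf{rows}(F)|\times|\mathsf{cols}(F)|$ array with $S_{ij}=1$ if row label $i$ lies in an earlier block of $\mathsf{CanonTop}(T)$ than column label $j$, else $0$ (it agrees with $T$ on cells of $F$). An entry $x$ of $T$ at $(j,k)$ is a cornersupport entry (and the cell a cornersupport) iff there exist a row $j'\ne j$ and column $k'\ne k$ with $S_{j'k'}\ne x$ and $S_{j'k}=S_{jk'}=x$; one says $S_{j'k'}$ induces $T_{jk}$ to be a cornersupport. *)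

theory Defs
  imports Main
begin

text \<open>A Ferrers diagram of semiperimeter n+1 is encoded by its set R of row labels
  (a subset of {0..n}); the column labels are the remaining labels.  The top row is
  labelled 0 and the first column (leftmost, last boundary step) is labelled n.\<close>

definition ferrers :: "nat \<Rightarrow> nat set \<Rightarrow> bool" where
  "ferrers n R \<longleftrightarrow> R \<subseteq> {0..n} \<and> 0 \<in> R \<and> n \<notin> R"

definition rowsF :: "nat \<Rightarrow> nat set \<Rightarrow> nat set" where
  "rowsF n R = R \<inter> {0..n}"

definition colsF :: "nat \<Rightarrow> nat set \<Rightarrow> nat set" where
  "colsF n R = {0..n} - R"

definition cellF :: "nat \<Rightarrow> nat set \<Rightarrow> nat \<Rightarrow> nat \<Rightarrow> bool" where
  "cellF n R i j \<longleftrightarrow> i \<in> rowsF n R \<and> j \<in> colsF n R \<and> i < j"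

definition EWtab :: "nat \<Rightarrow> nat set \<Rightarrow> (nat \<Rightarrow> nat \<Rightarrow> nat) set" where
  "EWtab n R = {T.
     (\<forall>i j. cellF n R i j \<longrightarrow> T i j \<in> {0, 1}) \<and>
     (\<forall>i j. \<not> cellF n R i j \<longrightarrow> T i j = 0) \<and>
     (\<forall>j. cellF n R 0 j \<longrightarrow> T 0 j = 1) \<and>
     (\<forall>i \<in> rowsF n R - {0}. \<exists>j. cellF n R i j \<and> T i j = 0) \<and>
     (\<forall>i1 i2 j1 j2. cellF n R i1 j1 \<and> cellF n R i1 j2 \<and> cellF n R i2 j1 \<and> cellF n R i2 j2
        \<longrightarrow> \<not> (T i1 j1 = 0 \<and> T i2 j2 = 0 \<and> T i1 j2 = 1 \<and> T i2 j1 = 1))}"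

definition adjG :: "nat \<Rightarrow> nat set \<Rightarrow> nat \<Rightarrow> nat \<Rightarrow> bool" where
  "adjG n R u v \<longleftrightarrow> cellF n R u v \<or> cellF n R v u"

definition degG :: "nat \<Rightarrow> nat set \<Rightarrow> nat \<Rightarrow> nat" where
  "degG n R v = card {u \<in> {0..n}. adjG n R u v}"

text \<open>Simultaneous toppling of a set A of non-sink vertices (grains sent to the sink vanish;
  the value at the sink is irrelevant).\<close>
definition toppleSet :: "nat \<Rightarrow> nat set \<Rightarrow> nat set \<Rightarrow> (nat \<Rightarrow> nat) \<Rightarrow> (nat \<Rightarrow> nat)" where
  "toppleSet n R A c = (\<lambda>v. (c v + card {u \<in> A. adjG n R u v}) - (if v \<in> A then degG n R v else 0))"

text \<open>Blocks are thus indexed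
  U0 = 0, V1 = 1, U1 = 2, V2 = 3, ...\<close>
fun canonStep :: "nat \<Rightarrow> nat set \<Rightarrow> (nat \<Rightarrow> nat) \<Rightarrow> nat \<Rightarrow> (nat \<Rightarrow> nat) \<times> nat set" where
  "canonStep n R c 0 = ((\<lambda>v. c v + (if adjG n R 0 v then 1 else 0)), {0})"
| "canonStep n R c (Suc k) =
     (let d = fst (canonStep n R c k);
          A = {v \<in> {1..n}. v \<in> (if even k then colsF n R else rowsF n R) \<and> degG n R v \<le> d v}
      in (toppleSet n R A d, A))"

definition canonBlock :: "nat \<Rightarrow> nat set \<Rightarrow> (nat \<Rightarrow> nat) \<Rightarrow> nat \<Rightarrow> nat set" where
  "canonBlock n R c k = snd (canonStep n R c k)"

definition canonTime :: "nat \<Rightarrow> nat set \<Rightarrow> (nat \<Rightarrow> nat) \<Rightarrow> nat \<Rightarrow> nat" where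
  "canonTime n R c v = (LEAST k. v \<in> canonBlock n R c k)"

definition phiTC :: "nat \<Rightarrow> nat set \<Rightarrow> (nat \<Rightarrow> nat \<Rightarrow> nat) \<Rightarrow> nat \<Rightarrow> nat" where
  "phiTC n R T i = (if i \<in> rowsF n R then card {j. cellF n R i j \<and> T i j = 1}
                    else card {r. cellF n R r i \<and> T r i = 0})"

definition suppTab :: "nat \<Rightarrow> nat set \<Rightarrow> (nat \<Rightarrow> nat \<Rightarrow> nat) \<Rightarrow> nat \<Rightarrow> nat \<Rightarrow> nat" where
  "suppTab n R T i j =
     (if canonTime n R (phiTC n R T) i < canonTime n R (phiTC n R T) j then 1 else 0)"

definition inducesCS :: "nat \<Rightarrow> nat set \<Rightarrow> (nat \<Rightarrow> nat \<Rightarrow> nat) \<Rightarrow> nat \<Rightarrow> nat \<Rightarrow> nat \<Rightarrow> nat \<Rightarrow> bool" where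
  "inducesCS n R T j k j' k' \<longleftrightarrow>
     j' \<in> rowsF n R \<and> k' \<in> colsF n R \<and> j' \<noteq> j \<and> k' \<noteq> k \<and>
     suppTab n R T j' k' \<noteq> T j k \<and> suppTab n R T j' k = T j k \<and> suppTab n R T j k' = T j k"

definition cornersupport :: "nat \<Rightarrow> nat set \<Rightarrow> (nat \<Rightarrow> nat \<Rightarrow> nat) \<Rightarrow> nat \<Rightarrow> nat \<Rightarrow> bool" where
  "cornersupport n R T j k \<longleftrightarrow> cellF n R j k \<and> (\<exists>j' k'. inducesCS n R T j k j' k')"

end

theory Submission imports Defs begin

lemma par_aux: "(a::nat) < Suc k \<Longrightarrow> a \<noteq> k \<Longrightarrow> even a = even k \<Longrightarrow> a + 2 \<le> k"
  by (simp add: even_iff_mod_2_eq_zero) presburger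

lemma par_strict: "\<not> (a::nat) < b \<Longrightarrow> even a \<noteq> even b \<Longrightarrow> b < a"
  by (cases "a = b") auto

locale ewl =
  fixes n :: nat and R :: "nat set" and T :: "nat \<Rightarrow> nat \<Rightarrow> nat"
  assumes fer: "ferrers n R" and ew: "T \<in> EWtab n R"
begin

abbreviation "cl \<equiv> phiTC n R T"
definition "dd k = fst (canonStep n R cl k)"
definition "blk k = canonBlock n R cl k"
definition "Top k = {v. \<exists>m\<le>k. v \<in> blk m}"
definition "pr u v \<longleftrightarrow> (cellF n R u v \<and> T u v = 1) \<or> (cellF n R v u \<and> T v u = 0)"

lemma R_sub: "R \<subseteq> {0..n}" "0 \<in> R" "n \<notin> R" using fer by (auto simp: ferrers_def)
lemma rowsF_eq: "rowsF n R = R" using R_sub by (auto simp: rowsF_def)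
lemma cell_iff: "cellF n R i j \<longleftrightarrow> i \<in> R \<and> j \<le> n \<and> j \<notin> R \<and> i < j"
  by (auto simp: cellF_def rowsF_eq colsF_def)

lemma ewD: "\<And>i j. cellF n R i j \<Longrightarrow> T i j = 0 \<or> T i j = 1"
  "\<And>j. cellF n R 0 j \<Longrightarrow> T 0 j = 1"
  "\<And>i. i \<in> R \<Longrightarrow> i \<noteq> 0 \<Longrightarrow> \<exists>j. cellF n R i j \<and> T i j = 0"
  "\<And>i1 i2 j1 j2. cellF n R i1 j1 \<Longrightarrow> cellF n R i1 j2 \<Longrightarrow> cellF n R i2 j1 \<Longrightarrow> cellF n R i2 j2
        \<Longrightarrow> \<not> (T i1 j1 = 0 \<and> T i2 j2 = 0 \<and> T i1 j2 = 1 \<and> T i2 j1 = 1)"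
  using ew by (auto simp: EWtab_def rowsF_eq)

lemma adj_iff: "adjG n R u v \<longleftrightarrow> pr u v \<or> pr v u"
  using ewD(1)[of u v] ewD(1)[of v u] unfolding adjG_def pr_def by auto

lemma pr_disj: "pr u v \<Longrightarrow> \<not> pr v u"
  by (auto simp: pr_def cell_iff)

lemma pr_range: "pr u v \<Longrightarrow> u \<le> n \<and> v \<le> n"
  using R_sub by (auto simp: pr_def cell_iff)

lemma pr_cls: "pr u v \<Longrightarrow> (u \<in> R \<longleftrightarrow> v \<notin> R)"
  by (auto simp: pr_def cell_iff)

lemma pr_0: "\<not> pr u 0"
proof
  assume "pr u 0"
  then have "cellF n R 0 u" "T 0 u = 0" by (auto simp: pr_def cell_iff)
  then show False using ewD(2)[of u] by simp
qed

lemma fin_pr: "finite {u. pr u v}" "finite {u. pr v u}"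
  by (rule finite_subset[of _ "{0..n}"], auto dest: pr_range)+

lemma deg_eq: "degG n R v = card {u. pr u v} + card {u. pr v u}"
proof -
  have "{u \<in> {0..n}. adjG n R u v} = {u. pr u v} \<union> {u. pr v u}"
    by (auto simp: adj_iff dest: pr_range)
  moreover have "{u. pr u v} \<inter> {u. pr v u} = {}" using pr_disj by auto
  ultimately show ?thesis unfolding degG_def using fin_pr by (simp add: card_Un_disjoint)
qed

lemma deg_eq2: "degG n R v = card {u. adjG n R u v}"
proof -
  have "{u \<in> {0..n}. adjG n R u v} = {u. adjG n R u v}"
    by (auto simp: adj_iff dest: pr_range)
  then show ?thesis unfolding degG_def by simp
qed

lemma fin_adj: "finite {u. adjG n R u v}"
proof -
  have "{u. adjG n R u v} = {u. pr u v} \<union> {u. pr v u}" by (auto simp: adj_iff)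
  then show ?thesis using fin_pr by simp
qed

lemma c_eq: "cl v = card {u. pr v u}"
proof (cases "v \<in> R")
  case True
  then have "{j. cellF n R v j \<and> T v j = 1} = {u. pr v u}" by (auto simp: pr_def cell_iff)
  then show ?thesis using True by (simp add: phiTC_def rowsF_eq)
next
  case False
  then have "{r. cellF n R r v \<and> T r v = 0} = {u. pr v u}" by (auto simp: pr_def cell_iff)
  then show ?thesis using False by (simp add: phiTC_def rowsF_eq)
qed

lemma pr_pos: "1 \<le> v \<Longrightarrow> v \<le> n \<Longrightarrow> card {u. pr u v} \<ge> 1"
proof -
  assume v: "1 \<le> v" "v \<le> n"
  have "\<exists>u. pr u v"
  proof (cases "v \<in> R")
    case True
    then obtain j where "cellF n R v j" "T v j = 0" using ewD(3) v by force
    then show ?thesis by (auto simp: pr_def)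
  next
    case False
    then have "cellF n R 0 v" using v R_sub by (auto simp: cell_iff)
    then show ?thesis using ewD(2) by (auto simp: pr_def)
  qed
  then show ?thesis using fin_pr[of v] by (metis Collect_empty_eq One_nat_def Suc_leI card_gt_0_iff)
qed

lemma blk0: "blk 0 = {0}" by (simp add: blk_def canonBlock_def)
lemma dd0: "dd 0 v = cl v + (if adjG n R 0 v then 1 else 0)" by (simp add: dd_def)
lemma blkSuc: "blk (Suc k) = {v \<in> {1..n}. v \<in> (if even k then colsF n R else rowsF n R) \<and> degG n R v \<le> dd k v}"
  by (simp add: blk_def canonBlock_def dd_def Let_def)
lemma ddSuc: "dd (Suc k) = toppleSet n R (blk (Suc k)) (dd k)"
  by (simp add: blk_def canonBlock_def dd_def Let_def)
lemma Top0: "Top 0 = {0}" by (simp add: Top_def blk0)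
lemma TopSuc: "Top (Suc k) = Top k \<union> blk (Suc k)"
  by (auto simp: Top_def le_Suc_eq)

definition "invk k \<longleftrightarrow> (\<forall>v\<in>{1..n}. dd k v = cl v + card {u\<in>Top k. adjG n R u v} - (if v \<in> Top k then degG n R v else 0))
   \<and> (\<forall>v\<in>Top k. \<forall>u. pr u v \<longrightarrow> u \<in> Top k) \<and> Top k \<subseteq> {0..n} \<and> 0 \<in> Top k"

lemma blk_char:
  assumes "invk k"
  shows "blk (Suc k) = {v\<in>{1..n}. v \<in> (if even k then colsF n R else rowsF n R) \<and> v \<notin> Top k \<and> {u. pr u v} \<subseteq> Top k}"
proof -
  have I1: "\<And>v. v\<in>{1..n} \<Longrightarrow> dd k v = cl v + card {u\<in>Top k. adjG n R u v} - (if v \<in> Top k then degG n R v else 0)"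
   and I2: "\<And>v u. v\<in>Top k \<Longrightarrow> pr u v \<Longrightarrow> u \<in> Top k" and I3: "Top k \<subseteq> {0..n}"
    using assms by (auto simp: invk_def)
  have key: "degG n R v \<le> dd k v \<longleftrightarrow> v \<notin> Top k \<and> {u. pr u v} \<subseteq> Top k" if v: "v\<in>{1..n}" for v
  proof (cases "v \<in> Top k")
    case True
    have "card {u\<in>Top k. adjG n R u v} \<le> card {u. adjG n R u v}"
      by (rule card_mono[OF fin_adj]) auto
    moreover have "card {u. pr u v} \<ge> 1" using pr_pos v by auto
    ultimately have "\<not> degG n R v \<le> dd k v" using I1[OF v] True deg_eq[of v] deg_eq2[of v] c_eq[of v] by auto
    then show ?thesis using True by simp
  next
    case False
    have E: "{u\<in>Top k. adjG n R u v} = Top k \<inter> {u. pr u v}"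
      using I2 False by (auto simp: adj_iff)
    have "card (Top k \<inter> {u. pr u v}) \<le> card {u. pr u v}" by (rule card_mono[OF fin_pr(1)]) auto
    moreover have "card (Top k \<inter> {u. pr u v}) = card {u. pr u v} \<longleftrightarrow> {u. pr u v} \<subseteq> Top k"
    proof
      assume "card (Top k \<inter> {u. pr u v}) = card {u. pr u v}"
      then have "Top k \<inter> {u. pr u v} = {u. pr u v}" using card_subset_eq[OF fin_pr(1), of "Top k \<inter> {u. pr u v}" v] by blast
      then show "{u. pr u v} \<subseteq> Top k" by blast
    next
      assume "{u. pr u v} \<subseteq> Top k"
      then have "Top k \<inter> {u. pr u v} = {u. pr u v}" by blast
      then show "card (Top k \<inter> {u. pr u v}) = card {u. pr u v}" by simp
    qed
    ultimately have L: "card {u. pr u v} \<le> card (Top k \<inter> {u. pr u v}) \<longleftrightarrow> {u. pr u v} \<subseteq> Top k"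
      by linarith
    have D: "dd k v = card {u. pr v u} + card (Top k \<inter> {u. pr u v})"
      using I1[OF v] False E c_eq[of v] by simp
    have "degG n R v \<le> dd k v \<longleftrightarrow> card {u. pr u v} \<le> card (Top k \<inter> {u. pr u v})"
      unfolding D deg_eq[of v] by linarith
    then show ?thesis using L False by simp
  qed
  show ?thesis unfolding blkSuc using key by auto
qed

lemma invk_Suc: assumes "invk k" shows "invk (Suc k)"
proof -
  have I1: "\<And>v. v\<in>{1..n} \<Longrightarrow> dd k v = cl v + card {u\<in>Top k. adjG n R u v} - (if v \<in> Top k then degG n R v else 0)"
   and I2: "\<And>v u. v\<in>Top k \<Longrightarrow> pr u v \<Longrightarrow> u \<in> Top k" and I3: "Top k \<subseteq> {0..n}" and I4: "0 \<in> Top k"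
    using assms by (auto simp: invk_def)
  define A where "A = blk (Suc k)"
  have A: "A = {v\<in>{1..n}. v \<in> (if even k then colsF n R else rowsF n R) \<and> v \<notin> Top k \<and> {u. pr u v} \<subseteq> Top k}"
    using blk_char[OF assms] A_def by simp
  have TS: "Top (Suc k) = Top k \<union> A" using TopSuc A_def by simp
  have dis: "Top k \<inter> A = {}" using A by auto
  have finT: "finite (Top k)" using I3 finite_subset by blast
  have finA: "finite A" using A by (auto intro: finite_subset[of _ "{1..n}"])
  have D: "dd (Suc k) v = cl v + card {u\<in>Top (Suc k). adjG n R u v} - (if v \<in> Top (Suc k) then degG n R v else 0)"
    if v: "v\<in>{1..n}" for v
  proof -
    have cU: "card {u\<in>Top (Suc k). adjG n R u v} = card {u\<in>Top k. adjG n R u v} + card {u\<in>A. adjG n R u v}"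
    proof -
      have "{u\<in>Top (Suc k). adjG n R u v} = {u\<in>Top k. adjG n R u v} \<union> {u\<in>A. adjG n R u v}" using TS by auto
      then show ?thesis using dis finT finA by (subst card_Un_disjoint[symmetric]) auto
    qed
    have dS: "dd (Suc k) v = (dd k v + card {u\<in>A. adjG n R u v}) - (if v \<in> A then degG n R v else 0)"
      using ddSuc A_def by (simp add: toppleSet_def)
    show ?thesis
    proof (cases "v \<in> Top k")
      case True
      have "{u. pr u v} \<subseteq> {u\<in>Top k. adjG n R u v}" using I2 True by (auto simp: adj_iff)
      then have "card {u. pr u v} \<le> card {u\<in>Top k. adjG n R u v}"
        by (rule card_mono[rotated]) (use finT in auto)
      then show ?thesis using True dis dS cU I1[OF v] TS deg_eq[of v] c_eq[of v] by auto
    next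
      case False
      then show ?thesis using dS cU I1[OF v] TS by auto
    qed
  qed
  have C: "\<forall>v\<in>Top (Suc k). \<forall>u. pr u v \<longrightarrow> u \<in> Top (Suc k)" using TS A I2 by blast
  have S3: "Top (Suc k) \<subseteq> {0..n}" using TS I3 A by auto
  have S4: "0 \<in> Top (Suc k)" using TS I4 by blast
  show ?thesis unfolding invk_def using D C S3 S4 by blast
qed

lemma invk_all: "invk k"
proof (induction k)
  case 0
  have "card {u\<in>{0}. adjG n R u v} = (if adjG n R 0 v then 1 else 0)" for v
    by (cases "adjG n R 0 v") (auto simp: Collect_conv_if)
  then show ?case unfolding invk_def Top0 using dd0 pr_0 by auto
next
  case (Suc k) then show ?case by (rule invk_Suc)
qed

lemma Top_sub: "Top k \<subseteq> {0..n}" and zero_Top: "0 \<in> Top k"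
  using invk_all[of k] by (auto simp: invk_def)

lemma blkS: "blk (Suc k) = {v\<in>{1..n}. v \<in> (if even k then colsF n R else rowsF n R) \<and> v \<notin> Top k \<and> {u. pr u v} \<subseteq> Top k}"
  using blk_char[OF invk_all] .

lemma Top_mono: "k \<le> k' \<Longrightarrow> Top k \<subseteq> Top k'"
  unfolding Top_def using le_trans by blast

definition "rr a b \<longleftrightarrow> (\<exists>c. pr a c \<and> pr c b \<and> a \<in> R)"

lemma rr_irrefl: "\<not> rr a a"
  by (auto simp: rr_def pr_def cell_iff)

lemma rr_short: assumes "rr p M" "rr M x" "p \<le> M" shows "rr p x"
proof -
  obtain c1 where c1: "pr p c1" "pr c1 M" "p \<in> R" using assms(1) by (auto simp: rr_def)
  obtain c2 where c2: "pr M c2" "pr c2 x" "M \<in> R" using assms(2) by (auto simp: rr_def)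
  have h1: "cellF n R p c1" "T p c1 = 1" using c1 by (auto simp: pr_def cell_iff)
  have h2: "cellF n R M c1" "T M c1 = 0" using c1 by (auto simp: pr_def cell_iff)
  have h3: "cellF n R M c2" "T M c2 = 1" using c2 by (auto simp: pr_def cell_iff)
  have h4: "cellF n R x c2" "T x c2 = 0" using c2 by (auto simp: pr_def cell_iff)
  have h5: "cellF n R p c2" using h3 c1 assms(3) by (auto simp: cell_iff)
  have "T p c2 = 1" using ewD(1)[OF h5] ewD(4)[OF h5 h1(1) h3(1) h2(1)] h1 h2 h3 by auto
  then have "pr p c2" using h5 by (auto simp: pr_def)
  then show ?thesis using c2 c1 by (auto simp: rr_def)
qed

lemma rr_closed_empty: "finite W \<Longrightarrow> \<forall>b\<in>W. \<exists>a\<in>W. rr a b \<Longrightarrow> W = {}"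
proof (induction "card W" arbitrary: W rule: less_induct)
  case less
  show ?case
  proof (rule ccontr)
    assume ne: "W \<noteq> {}"
    define M where "M = Max W"
    have MW: "M \<in> W" using ne less.prems M_def by auto
    have Mmax: "\<And>x. x \<in> W \<Longrightarrow> x \<le> M" using less.prems M_def by auto
    define W' where "W' = W - {M}"
    have cl': "\<forall>b\<in>W'. \<exists>a\<in>W'. rr a b"
    proof
      fix b assume b: "b \<in> W'"
      then obtain a where a: "a \<in> W" "rr a b" using less.prems W'_def by auto
      show "\<exists>a\<in>W'. rr a b"
      proof (cases "a = M")
        case False then show ?thesis using a W'_def by auto
      next
        case True
        obtain p where p: "p \<in> W" "rr p M" using less.prems MW by auto
        have "p \<noteq> M" using p rr_irrefl by auto
        moreover have "rr p b" using rr_short[OF p(2)] a True Mmax[OF p(1)] by auto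
        ultimately show ?thesis using p W'_def by auto
      qed
    qed
    have "card W' < card W" using MW less.prems(1) W'_def by (metis card_Diff1_less)
    then have "W' = {}" using less.hyps[OF _ _ cl'] less.prems W'_def by auto
    then have "W = {M}" using MW W'_def by auto
    then show False using less.prems rr_irrefl by auto
  qed
qed

lemma acyc: assumes "U \<subseteq> {0..n}" "\<forall>v\<in>U. \<exists>u\<in>U. pr u v" shows "U = {}"
proof -
  define W where "W = U \<inter> R"
  have "\<forall>b\<in>W. \<exists>a\<in>W. rr a b"
  proof
    fix b assume b: "b \<in> W"
    then obtain c where c: "c \<in> U" "pr c b" using assms W_def by auto
    then obtain a where a: "a \<in> U" "pr a c" using assms by auto
    have "a \<in> R" using a c b W_def pr_cls by blast
    then show "\<exists>a\<in>W. rr a b" using a c W_def by (auto simp: rr_def)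
  qed
  then have "W = {}" using rr_closed_empty W_def R_sub finite_subset by (metis finite_Int finite_atLeastAtMost)
  show ?thesis
  proof (rule ccontr)
    assume "U \<noteq> {}"
    then obtain v where v: "v \<in> U" by auto
    show False
    proof (cases "v \<in> R")
      case True then show False using v \<open>W = {}\<close> W_def by auto
    next
      case False
      then obtain u where "u \<in> U" "pr u v" using assms v by auto
      then show False using pr_cls False \<open>W = {}\<close> W_def by auto
    qed
  qed
qed

lemma progress: assumes "Top k \<noteq> {0..n}" shows "Top k \<subset> Top (Suc (Suc k))"
proof (rule ccontr)
  assume "\<not> Top k \<subset> Top (Suc (Suc k))"
  then have eq: "Top (Suc (Suc k)) = Top k" using Top_mono[of k "Suc (Suc k)"] by auto
  then have b1: "blk (Suc k) \<subseteq> Top k" and b2: "blk (Suc (Suc k)) \<subseteq> Top k"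
    using TopSuc[of k] TopSuc[of "Suc k"] by auto
  have eq1: "Top (Suc k) = Top k" using b1 TopSuc[of k] by auto
  define U where "U = {0..n} - Top k"
  have "\<forall>v\<in>U. \<exists>u\<in>U. pr u v"
  proof
    fix v assume v: "v \<in> U"
    show "\<exists>u\<in>U. pr u v"
    proof (rule ccontr)
      assume "\<not> (\<exists>u\<in>U. pr u v)"
      then have P: "{u. pr u v} \<subseteq> Top k" using U_def pr_range by auto
      have v1: "v \<in> {1..n}" "v \<notin> Top k" using v U_def zero_Top[of k] by (auto simp: Suc_le_eq)
      show False
      proof (cases "v \<in> (if even k then colsF n R else rowsF n R)")
        case True
        then have "v \<in> blk (Suc k)" using blkS[of k] v1 P by auto
        then show False using b1 v1 by auto
      next
        case False
        then have "v \<in> (if even (Suc k) then colsF n R else rowsF n R)" using v1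
          by (auto simp: colsF_def rowsF_eq)
        then have "v \<in> blk (Suc (Suc k))" using blkS[of "Suc k"] v1 P eq1 by auto
        then show False using b2 v1 by auto
      qed
    qed
  qed
  then have "U = {}" using acyc[of U] U_def by blast
  then show False using assms Top_sub[of k] U_def by auto
qed

lemma Top_full_aux: "Top (2*k) = {0..n} \<or> card (Top (2*k)) \<ge> k+1"
proof (induction k)
  case 0 then show ?case by (simp add: Top0)
next
  case (Suc k)
  have e: "2 * Suc k = Suc (Suc (2*k))" by simp
  show ?case
  proof (cases "Top (2*k) = {0..n}")
    case True
    then have "Top (2 * Suc k) = {0..n}" using Top_mono[of "2*k" "2*Suc k"] Top_sub[of "2*Suc k"] by auto
    then show ?thesis by simp
  next
    case False
    then have "Top (2*k) \<subset> Top (2 * Suc k)" using progress e by simp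
    then have "card (Top (2*k)) < card (Top (2 * Suc k))"
      by (rule psubset_card_mono[rotated]) (use Top_sub finite_subset in blast)
    then show ?thesis using Suc.IH False by auto
  qed
qed

lemma Top_full: "Top (2*n) = {0..n}"
proof -
  have "card (Top (2*n)) \<ge> n+1 \<Longrightarrow> Top (2*n) = {0..n}"
  proof -
    assume a: "card (Top (2*n)) \<ge> n+1"
    show "Top (2*n) = {0..n}"
      by (rule card_seteq[OF finite_atLeastAtMost Top_sub]) (use a in simp)
  qed
  then show ?thesis using Top_full_aux[of n] by auto
qed

definition "tm v = canonTime n R cl v"

lemma blk_uniq: "v \<in> blk m \<Longrightarrow> v \<in> blk m' \<Longrightarrow> m \<le> m'"
proof (rule ccontr)
  assume a: "v \<in> blk m" "v \<in> blk m'" "\<not> m \<le> m'"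
  then obtain k where k: "m = Suc k" by (cases m) auto
  have "v \<in> Top k" using a k by (auto simp: Top_def intro!: exI[of _ m'])
  then show False using a(1) k blkS[of k] by auto
qed

lemma tm_eq: "v \<in> blk m \<Longrightarrow> tm v = m"
  unfolding tm_def canonTime_def blk_def[symmetric]
  by (rule Least_equality) (auto intro: blk_uniq)

lemma tm_blk: "v \<le> n \<Longrightarrow> v \<in> blk (tm v)"
proof -
  assume "v \<le> n"
  then have "v \<in> Top (2*n)" using Top_full by auto
  then obtain m where "v \<in> blk m" by (auto simp: Top_def)
  then show ?thesis using tm_eq by simp
qed

lemma pr_tm: assumes "pr u v" shows "tm u < tm v"
proof -
  have v: "v \<le> n" using pr_range assms by auto
  have b: "v \<in> blk (tm v)" using tm_blk v .
  show ?thesis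
  proof (cases "tm v")
    case 0
    then show ?thesis using b blk0 pr_0 assms by auto
  next
    case (Suc k)
    then have "u \<in> Top k" using b blkS[of k] assms by auto
    then obtain m where "m \<le> k" "u \<in> blk m" by (auto simp: Top_def)
    then show ?thesis using tm_eq Suc by auto
  qed
qed

lemma tm_par: assumes "v \<le> n" shows "v \<in> R \<longleftrightarrow> even (tm v)"
proof -
  have b: "v \<in> blk (tm v)" using tm_blk assms .
  show ?thesis
  proof (cases "tm v")
    case 0
    then show ?thesis using b blk0 R_sub by auto
  next
    case (Suc k)
    then show ?thesis using b blkS[of k] by (auto simp: colsF_def rowsF_eq split: if_splits)
  qed
qed

lemma chain: assumes "v \<le> n" "tm v \<ge> 2" shows "\<exists>u. pr u v \<and> tm u = tm v - 1"
proof (rule ccontr)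
  assume na: "\<not> (\<exists>u. pr u v \<and> tm u = tm v - 1)"
  obtain k where k: "tm v = Suc k" "k \<ge> 1" using assms(2) by (cases "tm v") auto
  have b: "v \<in> blk (Suc k)" using tm_blk[OF assms(1)] k by simp
  have v1: "v \<in> {1..n}" "v \<notin> Top k" using b blkS[of k] by auto
  have par: "\<And>u. pr u v \<Longrightarrow> (even (tm u) \<longleftrightarrow> even k)"
    using tm_par pr_cls pr_range k by (metis even_Suc)
  have lt: "\<And>u. pr u v \<Longrightarrow> tm u + 2 \<le> k"
  proof -
    fix u assume u: "pr u v"
    have "tm u < Suc k" "tm u \<noteq> k" using pr_tm[OF u] k na u by auto
    moreover have "even (tm u) \<longleftrightarrow> even k" using par u .
    ultimately show "tm u + 2 \<le> k" by (rule par_aux)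
  qed
  obtain k' where k': "k = Suc (Suc k')"
  proof (cases k)
    case 0 then show ?thesis using k by simp
  next
    case (Suc k1)
    show ?thesis
    proof (cases k1)
      case 0
      then obtain u where "pr u v" using pr_pos[of v] v1 fin_pr
        by (metis (mono_tags, lifting) One_nat_def card.empty empty_Collect_eq le_zero_eq not_one_le_zero atLeastAtMost_iff)
      then show ?thesis using lt Suc 0 by fastforce
    next
      case (Suc k2) then show ?thesis using \<open>k = Suc k1\<close> that by simp
    qed
  qed
  have P: "{u. pr u v} \<subseteq> Top k'"
  proof
    fix u assume "u \<in> {u. pr u v}"
    then have u: "pr u v" by simp
    have "u \<in> blk (tm u)" using tm_blk pr_range u by auto
    moreover have "tm u \<le> k'" using lt[OF u] k' by simp
    ultimately show "u \<in> Top k'" by (auto simp: Top_def)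
  qed
  have "v \<notin> Top k'" using v1 Top_mono[of k' k] k' by auto
  moreover have "v \<in> (if even k' then colsF n R else rowsF n R)"
    using b blkS[of k] k' by auto
  ultimately have "v \<in> blk (Suc k')" using blkS[of k'] P v1 by auto
  then show False using tm_eq k k' by auto
qed

lemma supp_eq: "suppTab n R T i j = (if tm i < tm j then 1 else 0)"
  by (simp add: suppTab_def tm_def)

lemma pr_row: "j \<in> R \<Longrightarrow> pr u j \<longleftrightarrow> cellF n R j u \<and> T j u = 0"
  by (auto simp: pr_def cell_iff)
lemma pr_col: "k \<notin> R \<Longrightarrow> pr u k \<longleftrightarrow> cellF n R u k \<and> T u k = 1"
  by (auto simp: pr_def cell_iff)

lemma main:
  assumes cs: "cornersupport n R T j k"
  shows "\<exists>j' k'. inducesCS n R T j k j' k' \<and>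
           ((cellF n R j k \<and> cellF n R j k' \<and> cellF n R j' k' \<and>
              T j k = 0 \<and> T j k' = 0 \<and> T j' k' = 1) \<or>
            (cellF n R j k \<and> cellF n R j' k \<and> cellF n R j' k' \<and>
              T j k = 1 \<and> T j' k = 1 \<and> T j' k' = 0))"
proof -
  obtain j' k' where c: "cellF n R j k" and ind: "inducesCS n R T j k j' k'"
    using cs by (auto simp: cornersupport_def)
  have jk: "j \<in> R" "k \<notin> R" "j \<le> n" "k \<le> n" using c R_sub by (auto simp: cell_iff)
  have jk': "j' \<in> R" "k' \<notin> R" "j' \<le> n" "k' \<le> n" using ind R_sub by (auto simp: inducesCS_def rowsF_eq colsF_def)
  have pj: "even (tm j)" "odd (tm k)" "even (tm j')" "odd (tm k')"
    using tm_par jk jk' by auto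
  have I: "suppTab n R T j' k' \<noteq> T j k" "suppTab n R T j' k = T j k" "suppTab n R T j k' = T j k"
    using ind by (auto simp: inducesCS_def)
  consider "T j k = 0" | "T j k = 1" using ewD(1)[OF c] by auto
  then show ?thesis
  proof cases
    case 1
    have t: "tm j' < tm k'" "\<not> tm j' < tm k" "\<not> tm j < tm k'"
      using I(1) 1 unfolding supp_eq apply (cases "tm j' < tm k'"; simp)
      using I(2) 1 unfolding supp_eq apply (cases "tm j' < tm k"; simp)
      using I(3) 1 unfolding supp_eq apply (cases "tm j < tm k'"; simp)
      done
    have t2: "tm k < tm j'" using par_strict[OF t(2)] pj(2,3) by simp
    have t3: "tm k' < tm j" using par_strict[OF t(3)] pj(1,4) by simp
    have "tm j \<ge> 2" using t(1) t2 t3 by linarith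
    then obtain k2 where k2: "pr k2 j" "tm k2 = tm j - 1" using chain jk by blast
    have k2c: "cellF n R j k2" "T j k2 = 0" using k2 pr_row jk by auto
    have k2r: "k2 \<notin> R" "k2 \<le> n" using k2c by (auto simp: cell_iff)
    have "tm k \<noteq> 0" using pj(2) by (metis even_zero)
    then have k3: "tm k2 \<ge> 3" using t(1) t2 t3 k2(2) by linarith
    then obtain j2 where j2: "pr j2 k2" "tm j2 = tm k2 - 1" using chain k2r by fastforce
    have j2c: "cellF n R j2 k2" "T j2 k2 = 1" using j2 pr_col k2r by auto
    have j2r: "j2 \<in> R" using j2c by (auto simp: cell_iff)
    have a: "tm j2 < tm k2" using j2(2) k3 by linarith
    have b: "tm k < tm j2" using t(1) t2 t3 k2(2) j2(2) by linarith
    have cc: "\<not> tm j < tm k2" using k2(2) by linarith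
    have d: "j2 \<noteq> j" using a cc by auto
    have e: "k2 \<noteq> k" using b a by auto
    have "inducesCS n R T j k j2 k2"
      unfolding inducesCS_def supp_eq rowsF_eq using j2r k2r 1 a b cc d e
      by (simp add: colsF_def)
    then show ?thesis using c k2c j2c 1 by blast
  next
    case 2
    have t: "\<not> tm j' < tm k'" "tm j' < tm k" "tm j < tm k'"
      using I(1) 2 unfolding supp_eq apply (cases "tm j' < tm k'"; simp)
      using I(2) 2 unfolding supp_eq apply (cases "tm j' < tm k"; simp)
      using I(3) 2 unfolding supp_eq apply (cases "tm j < tm k'"; simp)
      done
    have t1: "tm k' < tm j'" using par_strict[OF t(1)] pj(3,4) by simp
    have "tm k \<ge> 3" using t(2,3) t1 by linarith
    then obtain j2 where j2: "pr j2 k" "tm j2 = tm k - 1" using chain jk by fastforce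
    have j2c: "cellF n R j2 k" "T j2 k = 1" using j2 pr_col jk by auto
    have j2r: "j2 \<in> R" "j2 \<le> n" using j2c by (auto simp: cell_iff)
    have "tm j2 \<ge> 2" using t(2,3) t1 j2(2) by linarith
    then obtain k2 where k2: "pr k2 j2" "tm k2 = tm j2 - 1" using chain j2r by blast
    have k2c: "cellF n R j2 k2" "T j2 k2 = 0" using k2 pr_row j2r by auto
    have k2r: "k2 \<notin> R" "k2 \<le> n" using k2c by (auto simp: cell_iff)
    have a: "tm k2 < tm j2" using k2(2) \<open>tm j2 \<ge> 2\<close> by linarith
    have cc: "tm j < tm k2" using t(2,3) t1 j2(2) k2(2) by linarith
    have b: "tm j2 < tm k" using j2(2) \<open>tm k \<ge> 3\<close> by linarith
    have d: "j2 \<noteq> j" using a cc by auto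
    have e: "k2 \<noteq> k" using a b by auto
    have "inducesCS n R T j k j2 k2"
      unfolding inducesCS_def supp_eq rowsF_eq using j2r k2r 2 a b cc d e
      by (simp add: colsF_def)
    then show ?thesis using c k2c j2c 2 by blast
  qed
qed
end

theorem lemma4p17:
  fixes n :: nat and R :: "nat set" and T :: "nat \<Rightarrow> nat \<Rightarrow> nat" and j k :: nat
  assumes "ferrers n R"
    and "T \<in> EWtab n R"
    and "cornersupport n R T j k"
  shows "\<exists>j' k'. inducesCS n R T j k j' k' \<and>
           ((cellF n R j k \<and> cellF n R j k' \<and> cellF n R j' k' \<and>
              T j k = 0 \<and> T j k' = 0 \<and> T j' k' = 1) \<or>
            (cellF n R j k \<and> cellF n R j' k \<and> cellF n R j' k' \<and>
              T j k = 1 \<and> T j' k = 1 \<and> T j' k' = 0))"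
proof -
  interpret ewl n R T using assms(1,2) by unfold_locales
  show ?thesis using main[OF assms(3)] .
qed

end
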